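(* Let $G$ be a finite group (not necessarily abelian, written additively) of even order $q$, and let $f:G\to G$ be two-to-one (every element of the image of $f$ has exactly two preimages). Then \[\mathrm{pres}(f)\le \lceil 2\sqrt{q}\rceil-1.\] Moreover, if $q$ is a perfect square, then $\mathrm{pres}(f)\le 2\sqrt{q}-2$.
   Context: For a function $g:G\to G$, $V(g)$ denotes the number of distinct values of $g$, i.e. $V(g)=\#\{g(x):x\in G\}$. A permutation of $G$ is a bijection $G\to G$. For functions $f,h:G\to G$, $f-h$ is the pointwise function $x\mapsto f(x)-h(x)$, and $g+f$ is $x\mapsto g(x)+f(x)$. The permutation resemblance of $f:G\to G$ is $\mathrm{pres}(f)=\min\{V(f-h): h \text{ a permutation of } G\}$, equivalently $\mathrm{pres}(f)=\min\{V(g): g:G\to G,\ g+f \text{ is a permutation of } G\}$. *)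

theory Defs
  imports Complex_Main
begin

definition num_values :: "('a \<Rightarrow> 'a) \<Rightarrow> nat" where
  "num_values g = card (range g)"

definition pres :: "('a::{group_add,finite} \<Rightarrow> 'a) \<Rightarrow> nat" where
  "pres f = Min {num_values (\<lambda>x. f x - h x) | h. bij h}"

definition two_to_one :: "('a \<Rightarrow> 'b) \<Rightarrow> bool" where
  "two_to_one f \<longleftrightarrow> (\<forall>y\<in>range f. card (f -` {y}) = 2)"

end

theory Submission
  imports Defs
begin

lemma ar1:
  fixes r j q c :: nat
  assumes "r * j \<le> q" "r * r \<le> c * q" "c \<le> r" "1 \<le> j"
  shows "(r - c) * (j + 1) \<le> q"
proof (cases "q = 0")
  case True then show ?thesis using assms by simp
next
  case False
  obtain i where i: "j = Suc i" using assms(4) by (cases j) auto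
  obtain u where u: "q = r * j + u" using assms(1) le_Suc_ex by blast
  have "(r - c) * q \<le> r * q - r * r" using assms(2,3) by (simp add: diff_mult_distrib)
  hence "(r - c) * (j + 1) * q \<le> (r * q - r * r) * (j + 1)"
    by (metis mult.commute mult.left_commute mult_le_mono2)
  also have "r * q - r * r = r * r * i + r * u" using u i by (simp add: algebra_simps)
  also have "(r * r * i + r * u) * (j + 1) + (r * r + r * i * u + u * u) = q * q"
    using u i by (simp add: algebra_simps)
  hence "(r * r * i + r * u) * (j + 1) \<le> q * q" by linarith
  finally have "(r - c) * (j + 1) * q \<le> q * q" .
  then show ?thesis using False by simp
qed

lemma ar2:
  fixes r q c :: nat
  assumes "r * 2 \<le> q" "r * r \<le> c * q" "c \<le> r"
  shows "(r - c) * 4 \<le> q"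
proof (cases "q = 0")
  case True then show ?thesis using assms by simp
next
  case False
  obtain u where u: "q = r * 2 + u" using assms(1) le_Suc_ex by blast
  have "(r - c) * q \<le> r * q - r * r" using assms(2,3) by (simp add: diff_mult_distrib)
  hence "(r - c) * 4 * q \<le> (r * q - r * r) * 4"
    by (metis mult.commute mult.left_commute mult_le_mono2)
  also have "r * q - r * r = r * r + r * u" using u by (simp add: algebra_simps)
  also have "(r * r + r * u) * 4 + u * u = q * q"
    using u by (simp add: algebra_simps)
  hence "(r * r + r * u) * 4 \<le> q * q" by linarith
  finally have "(r - c) * 4 * q \<le> q * q" .
  then show ?thesis using False by simp
qed

lemma set_shift:
  fixes p :: "'a::group_add"
  shows "{e. -e + p \<in> R} = (\<lambda>z. p - z) ` R"
proof safe
  fix e assume "-e + p \<in> R"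
  moreover have "e = p - (-e + p)" by (simp add: diff_conv_add_uminus minus_add add.assoc del: add_uminus_conv_diff)
  ultimately show "e \<in> (\<lambda>z. p - z) ` R" by blast
next
  fix z assume "z \<in> R"
  moreover have "- (p - z) + p = z" by (simp add: diff_conv_add_uminus minus_add add.assoc del: add_uminus_conv_diff)
  ultimately show "- (p - z) + p \<in> R" by simp
qed

lemma card_filter1: "finite A \<Longrightarrow> card {x\<in>A. P x} = (\<Sum>x\<in>A. if P x then 1 else (0::nat))"
proof -
  assume f: "finite A"
  have "card {x\<in>A. P x} = (\<Sum>x\<in>{x\<in>A. P x}. (1::nat))" by simp
  also have "\<dots> = (\<Sum>x\<in>A. if P x then 1 else (0::nat))" by (rule sum.inter_filter[OF f])
  finally show ?thesis .
qed

lemma avg: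
  fixes \<phi> :: "'a::{group_add,finite} \<Rightarrow> 'a"
  assumes "card R = card A"
  shows "\<exists>e. card A * card A \<le> card {x\<in>A. -e + \<phi> x \<in> R} * card (UNIV::'a set)"
proof (rule ccontr)
  assume "\<not> ?thesis"
  hence lt: "\<And>e. card {x\<in>A. -e + \<phi> x \<in> R} * card (UNIV::'a set) < card A * card A" by (simp add: not_le)
  have "(\<Sum>e\<in>UNIV. card {x\<in>A. -e + \<phi> x \<in> R}) = (\<Sum>e\<in>UNIV. \<Sum>x\<in>A. if -e + \<phi> x \<in> R then 1 else 0)"
    by (intro sum.cong refl card_filter1) simp
  also have "\<dots> = (\<Sum>x\<in>A. \<Sum>e\<in>UNIV. if -e + \<phi> x \<in> R then 1 else 0)"
    by (rule sum.swap)
  also have "\<dots> = (\<Sum>x\<in>A. card {e. -e + \<phi> x \<in> R})"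
    using card_filter1[of UNIV "\<lambda>e. -e + \<phi> _ \<in> R"] by simp
  also have "\<dots> = (\<Sum>x\<in>A. card R)"
  proof (rule sum.cong)
    fix x
    have "inj (\<lambda>z. \<phi> x - z)" by (rule injI) (metis add_left_cancel diff_conv_add_uminus neg_equal_iff_equal)
    then show "card {e. -e + \<phi> x \<in> R} = card R"
      by (simp add: set_shift card_image inj_on_subset)
  qed simp
  finally have s: "(\<Sum>e\<in>UNIV. card {x\<in>A. -e + \<phi> x \<in> R}) = card A * card A"
    using assms by simp
  have "(\<Sum>e\<in>UNIV. card {x\<in>A. -e + \<phi> x \<in> R} * card (UNIV::'a set)) < (\<Sum>e\<in>(UNIV::'a set). card A * card A)"
    by (rule sum_strict_mono) (use lt in auto)
  moreover have "(\<Sum>e\<in>UNIV. card {x\<in>A. -e + \<phi> x \<in> R} * card (UNIV::'a set)) = card A * card A * card (UNIV::'a set)"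
    by (simp only: sum_distrib_right[symmetric] s)
  ultimately show False by simp
qed

lemma step:
  fixes \<phi> :: "'a::{group_add,finite} \<Rightarrow> 'a"
  assumes inj: "inj_on \<phi> A" and cR: "card R = card A"
    and S: "S = {x\<in>A. -e + \<phi> x \<in> R}"
  shows "card (A - S) = card A - card S"
    and "card (R - (\<lambda>x. -e + \<phi> x) ` S) = card A - card S"
    and "bij_betw h' (A - S) (R - (\<lambda>x. -e + \<phi> x) ` S) \<Longrightarrow>
         \<exists>h. bij_betw h A R \<and> (\<lambda>x. \<phi> x - h x) ` A \<subseteq> insert e ((\<lambda>x. \<phi> x - h' x) ` (A - S))"
proof -
  let ?T = "\<lambda>x. -e + \<phi> x"
  have SA: "S \<subseteq> A" using S by auto
  have TR: "?T ` S \<subseteq> R" using S by auto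
  have injT: "inj_on ?T S"
    using inj SA by (auto simp: inj_on_def)
  have cT: "card (?T ` S) = card S" using injT by (rule card_image)
  show "card (A - S) = card A - card S" using SA by (simp add: card_Diff_subset)
  show "card (R - ?T ` S) = card A - card S" using TR cT cR by (simp add: card_Diff_subset)
  assume b: "bij_betw h' (A - S) (R - ?T ` S)"
  define h where "h = (\<lambda>x. if x \<in> S then ?T x else h' x)"
  have b1: "bij_betw h S (?T ` S)"
    using injT by (auto simp: bij_betw_def h_def inj_on_def)
  have b2: "bij_betw h (A - S) (R - ?T ` S)"
    using b by (rule bij_betw_cong[THEN iffD1, rotated]) (auto simp: h_def)
  have "bij_betw h (S \<union> (A - S)) (?T ` S \<union> (R - ?T ` S))"
    by (rule bij_betw_combine[OF b1 b2]) auto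
  moreover have "S \<union> (A - S) = A" "?T ` S \<union> (R - ?T ` S) = R" using SA TR by auto
  ultimately have "bij_betw h A R" by simp
  moreover have "(\<lambda>x. \<phi> x - h x) ` A \<subseteq> insert e ((\<lambda>x. \<phi> x - h' x) ` (A - S))"
  proof
    fix y assume "y \<in> (\<lambda>x. \<phi> x - h x) ` A"
    then obtain x where x: "x \<in> A" "y = \<phi> x - h x" by auto
    show "y \<in> insert e ((\<lambda>x. \<phi> x - h' x) ` (A - S))"
    proof (cases "x \<in> S")
      case True
      have "\<phi> x - (-e + \<phi> x) = e" by (simp add: diff_conv_add_uminus minus_add add.assoc del: add_uminus_conv_diff)
      then show ?thesis using True x by (simp add: h_def)
    next
      case False then show ?thesis using x by (auto simp: h_def)
    qed
  qed
  ultimately show "\<exists>h. bij_betw h A R \<and> (\<lambda>x. \<phi> x - h x) ` A \<subseteq> insert e ((\<lambda>x. \<phi> x - h' x) ` (A - S))"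
    by blast
qed

lemma main:
  fixes \<phi> :: "'a::{group_add,finite} \<Rightarrow> 'a"
  shows "\<forall>A R j. inj_on \<phi> A \<longrightarrow> card R = card A \<longrightarrow> card A * j \<le> card (UNIV::'a set) \<longrightarrow> 1 \<le> j \<longrightarrow>
     (\<exists>h. bij_betw h A R \<and> card ((\<lambda>x. \<phi> x - h x) ` A) \<le> d + card (UNIV::'a set) div (j + d))"
proof (induction d)
  case 0
  show ?case
  proof (intro allI impI)
    fix A R :: "'a set" and j :: nat
    assume a: "inj_on \<phi> A" "card R = card A" "card A * j \<le> card (UNIV::'a set)" "1 \<le> j"
    obtain h where h: "bij_betw h A R" using finite_same_card_bij[of A R] a(2) by auto
    have "card ((\<lambda>x. \<phi> x - h x) ` A) \<le> card A" by (rule card_image_le) simp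
    also have "card A \<le> card (UNIV::'a set) div j" using a(3,4) by (simp add: less_eq_div_iff_mult_less_eq)
    finally show "\<exists>h. bij_betw h A R \<and> card ((\<lambda>x. \<phi> x - h x) ` A) \<le> 0 + card (UNIV::'a set) div (j + 0)"
      using h by auto
  qed
next
  case (Suc d)
  show ?case
  proof (intro allI impI)
    fix A R :: "'a set" and j :: nat
    assume a: "inj_on \<phi> A" "card R = card A" "card A * j \<le> card (UNIV::'a set)" "1 \<le> j"
    show "\<exists>h. bij_betw h A R \<and> card ((\<lambda>x. \<phi> x - h x) ` A) \<le> Suc d + card (UNIV::'a set) div (j + Suc d)"
    proof (cases "A = {}")
      case True
      then have "R = {}" using a(2) by simp
      then show ?thesis using True by (auto simp: bij_betw_def)
    next
      case False
      obtain e where e: "card A * card A \<le> card {x\<in>A. -e + \<phi> x \<in> R} * card (UNIV::'a set)"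
        using avg[OF a(2)] by blast
      define S where "S = {x\<in>A. -e + \<phi> x \<in> R}"
      have cS: "card S \<le> card A" unfolding S_def by (rule card_mono) auto
      note st = step[OF a(1,2) S_def]
      have r: "(card A - card S) * (j + 1) \<le> card (UNIV::'a set)"
        by (rule ar1[OF a(3) _ cS a(4)]) (use e S_def in simp)
      have inj': "inj_on \<phi> (A - S)" using a(1) by (rule inj_on_subset) auto
      have "\<exists>h'. bij_betw h' (A - S) (R - (\<lambda>x. -e + \<phi> x) ` S) \<and>
        card ((\<lambda>x. \<phi> x - h' x) ` (A - S)) \<le> d + card (UNIV::'a set) div (j + 1 + d)"
        using Suc.IH[rule_format, of "A - S" "R - (\<lambda>x. -e + \<phi> x) ` S" "j + 1"] inj' st(1,2) r
        by simp
      then obtain h' where h': "bij_betw h' (A - S) (R - (\<lambda>x. -e + \<phi> x) ` S)"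
        "card ((\<lambda>x. \<phi> x - h' x) ` (A - S)) \<le> d + card (UNIV::'a set) div (j + 1 + d)"
        by blast
      obtain h where h: "bij_betw h A R" "(\<lambda>x. \<phi> x - h x) ` A \<subseteq> insert e ((\<lambda>x. \<phi> x - h' x) ` (A - S))"
        using st(3)[OF h'(1)] by blast
      have "card ((\<lambda>x. \<phi> x - h x) ` A) \<le> card (insert e ((\<lambda>x. \<phi> x - h' x) ` (A - S)))"
        by (rule card_mono[OF _ h(2)]) simp
      also have "\<dots> \<le> Suc (card ((\<lambda>x. \<phi> x - h' x) ` (A - S)))" by (simp add: card_insert_le_m1)
      finally show ?thesis using h(1) h'(2) by (intro exI[of _ h]) simp
    qed
  qed
qed

lemma pres_le:
  fixes f h :: "'a::{group_add,finite} \<Rightarrow> 'a"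
  assumes "bij h"
  shows "pres f \<le> num_values (\<lambda>x. f x - h x)"
proof -
  have "finite {num_values (\<lambda>x. f x - h x) | h. bij h}"
  proof (rule finite_subset)
    show "{num_values (\<lambda>x. f x - h x) | h. bij h} \<subseteq> {..card (UNIV::'a set)}"
      by (auto simp: num_values_def card_mono)
  qed simp
  then show ?thesis unfolding pres_def using assms by (intro Min_le) auto
qed

lemma reduce:
  fixes f :: "'a::{group_add,finite} \<Rightarrow> 'a"
  assumes "two_to_one f"
  shows "\<exists>A1. inj_on f A1 \<and> card A1 * 2 = card (UNIV::'a set) \<and>
     card (UNIV - f ` A1) = card A1 \<and>
     (\<forall>h1. bij_betw h1 A1 (UNIV - f ` A1) \<longrightarrow> pres f \<le> Suc (card ((\<lambda>x. f x - h1 x) ` A1)))"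
proof -
  let ?Y = "range f"
  have fib: "\<And>y. y \<in> ?Y \<Longrightarrow> card (f -` {y}) = 2" using assms unfolding two_to_one_def by blast
  define a where "a = (\<lambda>y. SOME x. f x = y)"
  have fa: "\<And>y. y \<in> ?Y \<Longrightarrow> f (a y) = y" unfolding a_def by (auto intro: someI)
  define A0 where "A0 = a ` ?Y"
  define A1 where "A1 = UNIV - A0"
  have injA0: "inj_on f A0"
  proof (rule inj_onI)
    fix x1 x2 assume "x1 \<in> A0" "x2 \<in> A0" "f x1 = f x2"
    then obtain y1 y2 where "y1 \<in> ?Y" "y2 \<in> ?Y" "x1 = a y1" "x2 = a y2" unfolding A0_def by blast
    then show "x1 = x2" using fa \<open>f x1 = f x2\<close> by metis
  qed
  have imA0: "f ` A0 = ?Y"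
  proof -
    have "f ` A0 = (\<lambda>y. f (a y)) ` ?Y" unfolding A0_def by (simp add: image_image)
    also have "\<dots> = (\<lambda>y. y) ` ?Y" by (rule image_cong[OF refl fa])
    finally show ?thesis by simp
  qed
  have injA1: "inj_on f A1"
  proof (rule inj_onI, rule ccontr)
    fix x1 x2 assume x: "x1 \<in> A1" "x2 \<in> A1" "f x1 = f x2" "x1 \<noteq> x2"
    let ?y = "f x1"
    have yY: "?y \<in> ?Y" by simp
    have "a ?y \<in> A0" unfolding A0_def by simp
    hence ne: "a ?y \<noteq> x1" "a ?y \<noteq> x2" using x(1,2) unfolding A1_def by auto
    have "f (a ?y) = ?y" by (rule fa[OF yY])
    hence "{x1, x2, a ?y} \<subseteq> f -` {?y}" using x(3) by auto
    hence "card {x1, x2, a ?y} \<le> card (f -` {?y})" by (intro card_mono) auto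
    also have "\<dots> = 2" using fib[OF yY] .
    finally show False using x(4) ne by (simp add: card_insert_if)
  qed
  have imA1: "f ` A1 = ?Y"
  proof
    show "?Y \<subseteq> f ` A1"
    proof
      fix y assume y: "y \<in> ?Y"
      obtain u v where uv: "f -` {y} = {u, v}" "u \<noteq> v" using fib[OF y] by (auto simp: card_2_iff)
      have fu: "f u = y" "f v = y" using uv(1) by (metis insertI1 insertI2 vimage_singleton_eq)+
      obtain x where x: "f x = y" "x \<noteq> a y"
      proof (cases "u = a y")
        case True then show ?thesis using that[of v] fu uv(2) by simp
      next
        case False then show ?thesis using that[of u] fu by simp
      qed
      have "x \<in> A1"
      proof (rule ccontr)
        assume "x \<notin> A1"
        then obtain y' where y': "y' \<in> ?Y" "x = a y'" unfolding A1_def A0_def by blast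
        then have "y' = y" using fa[OF y'(1)] x(1) by simp
        then show False using y' x(2) by simp
      qed
      then show "y \<in> f ` A1" using x(1) by blast
    qed
  qed blast
  have cA0: "card A0 = card ?Y" using card_image[OF injA0] imA0 by simp
  have cA1: "card A1 = card ?Y" using card_image[OF injA1] imA1 by simp
  have "card A1 = card (UNIV::'a set) - card A0" unfolding A1_def by (simp add: card_Diff_subset)
  moreover have "card A0 \<le> card (UNIV::'a set)" by (rule card_mono) simp_all
  ultimately have c2: "card A1 * 2 = card (UNIV::'a set)" using cA0 cA1 by linarith
  have "card (UNIV - f ` A1) = card (UNIV::'a set) - card (f ` A1)" by (simp add: card_Diff_subset)
  moreover have "card (f ` A1) = card A1" using imA1 cA1 by simp
  ultimately have cR: "card (UNIV - f ` A1) = card A1" using c2 by linarith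
  have "pres f \<le> Suc (card ((\<lambda>x. f x - h1 x) ` A1))" if b: "bij_betw h1 A1 (UNIV - f ` A1)" for h1
  proof -
    define h where "h = (\<lambda>x. if x \<in> A0 then f x else h1 x)"
    have bf: "bij_betw f A0 ?Y" using injA0 imA0 by (simp add: bij_betw_def)
    have b0: "bij_betw h A0 ?Y"
      using bf by (rule bij_betw_cong[THEN iffD1, rotated]) (simp add: h_def)
    have b1': "bij_betw h1 A1 (UNIV - ?Y)" using b imA1 by simp
    have b1: "bij_betw h A1 (UNIV - ?Y)"
      using b1' by (rule bij_betw_cong[THEN iffD1, rotated]) (simp add: h_def A1_def)
    have "bij_betw h (A0 \<union> A1) (?Y \<union> (UNIV - ?Y))"
      by (rule bij_betw_combine[OF b0 b1]) blast
    moreover have "A0 \<union> A1 = UNIV" unfolding A1_def by blast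
    moreover have "?Y \<union> (UNIV - ?Y) = UNIV" by blast
    ultimately have bh: "bij h" by simp
    have "range (\<lambda>x. f x - h x) \<subseteq> insert 0 ((\<lambda>x. f x - h1 x) ` A1)"
    proof
      fix z assume "z \<in> range (\<lambda>x. f x - h x)"
      then obtain x where z: "z = f x - h x" by blast
      show "z \<in> insert 0 ((\<lambda>x. f x - h1 x) ` A1)"
      proof (cases "x \<in> A0")
        case True then show ?thesis using z by (simp add: h_def)
      next
        case False then have "x \<in> A1" "h x = h1 x" unfolding A1_def h_def by simp_all
        then show ?thesis using z by simp
      qed
    qed
    hence "num_values (\<lambda>x. f x - h x) \<le> card (insert 0 ((\<lambda>x. f x - h1 x) ` A1))"
      unfolding num_values_def by (intro card_mono) simp_all
    also have "\<dots> \<le> Suc (card ((\<lambda>x. f x - h1 x) ` A1))" by (simp add: card_insert_le_m1)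
    finally show ?thesis using pres_le[OF bh, of f] by linarith
  qed
  then show ?thesis using injA1 c2 cR by blast
qed

lemma general_bound:
  fixes f :: "'a::{group_add,finite} \<Rightarrow> 'a"
  assumes "two_to_one f" "2 \<le> s"
  shows "pres f \<le> s - 1 + card (UNIV::'a set) div s"
proof -
  obtain A1 where A: "inj_on f A1" "card A1 * 2 = card (UNIV::'a set)"
     "card (UNIV - f ` A1) = card A1"
     "\<And>h1. bij_betw h1 A1 (UNIV - f ` A1) \<Longrightarrow> pres f \<le> Suc (card ((\<lambda>x. f x - h1 x) ` A1))"
    using reduce[OF assms(1)] by blast
  obtain h where h: "bij_betw h A1 (UNIV - f ` A1)"
    "card ((\<lambda>x. f x - h x) ` A1) \<le> (s - 2) + card (UNIV::'a set) div (2 + (s - 2))"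
  proof -
    have c: "card A1 * 2 \<le> card (UNIV::'a set)" using A(2) by simp
    show ?thesis using main[of f "s - 2", rule_format, OF A(1) A(3) c] that by auto
  qed
  have "2 + (s - 2) = s" using assms(2) by simp
  then show ?thesis using A(4)[OF h(1)] h(2) assms(2) by simp
qed

lemma diff_eq_shift:
  fixes e y y' :: "'a::group_add"
  assumes "-e + y = y'" shows "e = y - y'"
proof -
  have "y - y' = y - (-e + y)" using assms by simp
  also have "\<dots> = e" by (simp add: diff_conv_add_uminus minus_add add.assoc del: add_uminus_conv_diff)
  finally show ?thesis by simp
qed

lemma square_bound:
  fixes f :: "'a::{group_add,finite} \<Rightarrow> 'a"
  assumes "two_to_one f" "card (UNIV::'a set) = k * k" "2 \<le> k"
  shows "pres f \<le> 2 * k - 2"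
proof -
  let ?q = "card (UNIV::'a set)"
  obtain A1 where A: "inj_on f A1" "card A1 * 2 = ?q"
     "card (UNIV - f ` A1) = card A1"
     "\<And>h1. bij_betw h1 A1 (UNIV - f ` A1) \<Longrightarrow> pres f \<le> Suc (card ((\<lambda>x. f x - h1 x) ` A1))"
    using reduce[OF assms(1)] by blast
  define R where "R = UNIV - f ` A1"
  show ?thesis
  proof (cases "k = 2")
    case True
    hence q4: "?q = 4" using assms(2) by simp
    have cY: "card (f ` A1) = 2" using A(1,2) q4 by (simp add: card_image)
    then obtain y1 y2 where Y: "f ` A1 = {y1, y2}" by (auto simp: card_2_iff)
    have "card {0, y1 - y2, y2 - y1} \<le> 3" by (simp add: card_insert_if)
    hence "{0, y1 - y2, y2 - y1} \<noteq> UNIV" using q4 by auto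
    then obtain e where e: "e \<noteq> 0" "e \<noteq> y1 - y2" "e \<noteq> y2 - y1" by auto
    define S where "S = {x\<in>A1. -e + f x \<in> R}"
    have SA: "S = A1"
    proof -
      have "-e + f x \<in> R" if "x \<in> A1" for x
      proof -
        have fx: "f x = y1 \<or> f x = y2" using Y that by blast
        have "-e + f x \<notin> {y1, y2}"
        proof
          assume "-e + f x \<in> {y1, y2}"
          then obtain y' where "y' \<in> {y1,y2}" "-e + f x = y'" by blast
          then have "e = f x - y'" by (rule_tac diff_eq_shift) simp
          then show False using fx e \<open>y' \<in> {y1,y2}\<close> by auto
        qed
        then show ?thesis unfolding R_def using Y by auto
      qed
      then show ?thesis unfolding S_def by auto
    qed
    note st = step[OF A(1) A(3)[folded R_def] S_def]
    have e1: "A1 - S = {}" using SA by simp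
    have e2: "R - (\<lambda>x. -e + f x) ` S = {}"
      using st(2) by (simp add: SA R_def)
    obtain h where h: "bij_betw h A1 R" "(\<lambda>x. f x - h x) ` A1 \<subseteq> insert e ((\<lambda>x. f x - id x) ` (A1 - S))"
      using st(3)[of id] e1 e2 by auto
    have "card ((\<lambda>x. f x - h x) ` A1) \<le> card {e}"
      using h(2) e1 by (intro card_mono) auto
    then show ?thesis using A(4)[OF h(1)[unfolded R_def]] True by simp
  next
    case False
    hence k4: "4 \<le> k"
    proof -
      have "even ?q" using A(2) by (metis dvd_triv_right)
      hence "even k" using assms(2) by simp
      then show ?thesis using False assms(3) by (auto elim!: evenE)
    qed
    obtain e where e: "card A1 * card A1 \<le> card {x\<in>A1. -e + f x \<in> R} * ?q"
      using avg[of R A1 f] A(3) R_def by auto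
    define S where "S = {x\<in>A1. -e + f x \<in> R}"
    have cS: "card S \<le> card A1" unfolding S_def by (rule card_mono) auto
    note st = step[OF A(1) A(3)[folded R_def] S_def]
    have r4: "card (A1 - S) * 4 \<le> ?q"
      using st(1) ar2[of "card A1" ?q "card S"] A(2) e cS S_def by simp
    obtain h' where h': "bij_betw h' (A1 - S) (R - (\<lambda>x. -e + f x) ` S)"
      "card ((\<lambda>x. f x - h' x) ` (A1 - S)) \<le> (k - 4) + ?q div (4 + (k - 4))"
    proof -
      have inj': "inj_on f (A1 - S)" using A(1) by (rule inj_on_subset) auto
      show ?thesis
        using main[of f "k - 4", rule_format, of "A1 - S" "R - (\<lambda>x. -e + f x) ` S" 4] inj' st(1,2) r4 that
        by auto
    qed
    obtain h where h: "bij_betw h A1 R" "(\<lambda>x. f x - h x) ` A1 \<subseteq> insert e ((\<lambda>x. f x - h' x) ` (A1 - S))"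
      using st(3)[OF h'(1)] by blast
    have "card ((\<lambda>x. f x - h x) ` A1) \<le> card (insert e ((\<lambda>x. f x - h' x) ` (A1 - S)))"
      by (rule card_mono[OF _ h(2)]) simp
    also have "\<dots> \<le> Suc (card ((\<lambda>x. f x - h' x) ` (A1 - S)))" by (simp add: card_insert_le_m1)
    finally have "card ((\<lambda>x. f x - h x) ` A1) \<le> Suc ((k - 4) + k)"
      using h'(2) k4 assms(2) by simp
    then show ?thesis using A(4)[OF h(1)[unfolded R_def]] k4 by simp
  qed
qed

lemma ceil_bound:
  fixes q :: nat
  assumes "2 \<le> q"
  defines "s \<equiv> nat \<lceil>sqrt (real q)\<rceil>"
  shows "2 \<le> s" "int (s - 1 + q div s) \<le> \<lceil>2 * sqrt (real q)\<rceil> - 1"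
proof -
  have sq1: "sqrt (real q) > 1" using assms(1) by simp
  have cs: "real s = of_int \<lceil>sqrt (real q)\<rceil>" unfolding s_def using sq1 by simp
  have s1: "sqrt (real q) \<le> real s" using cs by linarith
  have s2: "real s < sqrt (real q) + 1" using cs by linarith
  show "2 \<le> s" using s1 sq1 cs by linarith
  have sp: "real s > 0" using s1 sq1 by linarith
  have "real (q div s) \<le> real q / real s"
    by (rule of_nat_div_le_of_nat)
  moreover have "real s + real q / real s < 2 * sqrt (real q) + 1"
  proof -
    have sqq: "sqrt (real q) * sqrt (real q) = real q" by simp
    have "(real s - sqrt (real q)) * (real s - sqrt (real q)) < 1 * 1"
      using s1 s2 by (intro mult_strict_mono') auto
    hence "(real s - sqrt (real q)) * (real s - sqrt (real q)) < real s" using sp s1 sq1 by linarith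
    hence "real s * real s + real q < (2 * sqrt (real q) + 1) * real s"
      using sqq by (simp add: algebra_simps)
    hence "(real s * real s + real q) / real s < 2 * sqrt (real q) + 1"
      using sp by (simp add: divide_less_eq)
    then show ?thesis using sp by (simp add: add_divide_distrib)
  qed
  ultimately have "real s + real (q div s) < of_int \<lceil>2 * sqrt (real q)\<rceil> + 1"
    using le_of_int_ceiling[of "2 * sqrt (real q)"] by linarith
  hence "int s + int (q div s) < \<lceil>2 * sqrt (real q)\<rceil> + 1" by linarith
  then show "int (s - 1 + q div s) \<le> \<lceil>2 * sqrt (real q)\<rceil> - 1"
    using \<open>2 \<le> s\<close> by linarith
qed

theorem theorem1p2:
  fixes f :: "'a::{group_add,finite} \<Rightarrow> 'a"
  assumes "even (card (UNIV :: 'a set))"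
    and "two_to_one f"
  shows "int (pres f) \<le> \<lceil>2 * sqrt (real (card (UNIV :: 'a set)))\<rceil> - 1 \<and>
         ((\<exists>k::nat. card (UNIV :: 'a set) = k^2) \<longrightarrow>
            real (pres f) \<le> 2 * sqrt (real (card (UNIV :: 'a set))) - 2)"
proof
  let ?q = "card (UNIV :: 'a set)"
  have "?q > 0" by (simp add: card_gt_0_iff)
  have q2: "2 \<le> ?q"
  proof -
    obtain t where "?q = 2 * t" using assms(1) by (auto elim!: evenE)
    then show ?thesis using \<open>?q > 0\<close> by simp
  qed
  define s where "s = nat \<lceil>sqrt (real ?q)\<rceil>"
  have cb: "2 \<le> s" "int (s - 1 + ?q div s) \<le> \<lceil>2 * sqrt (real ?q)\<rceil> - 1"
    using ceil_bound[OF q2] unfolding s_def by auto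
  show "int (pres f) \<le> \<lceil>2 * sqrt (real ?q)\<rceil> - 1"
    using general_bound[OF assms(2) cb(1)] cb(2) by linarith
  show "(\<exists>k::nat. ?q = k^2) \<longrightarrow> real (pres f) \<le> 2 * sqrt (real ?q) - 2"
  proof
    assume "\<exists>k::nat. ?q = k^2"
    then obtain k :: nat where k: "?q = k * k" by (auto simp: power2_eq_square)
    have "2 \<le> k"
    proof (rule ccontr)
      assume "\<not> 2 \<le> k"
      hence "k = 0 \<or> k = 1" by auto
      then show False using q2 k by auto
    qed
    have "pres f \<le> 2 * k - 2" by (rule square_bound[OF assms(2) k \<open>2 \<le> k\<close>])
    moreover have "sqrt (real ?q) = real k" using k by simp
    ultimately show "real (pres f) \<le> 2 * sqrt (real ?q) - 2" using \<open>2 \<le> k\<close> by simp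
  qed
qed

end
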